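(* Let $G$ be a Garside group with Garside monoid $M$ (so $M\subset G$). For every $a\in G$, the centralizer $Z(a)=\{c\in G:\ ca=ac\}$ is generated (as a group) by elements of $M$, i.e. $Z(a)$ is generated by $Z(a)\cap M$.
   Context: A monoid $M$ is atomic if it is generated by its atoms (elements $x\neq 1$ such that $x=yz$ implies $y=1$ or $z=1$) and for every $a\in M$ there is $N_a>0$ such that $a$ is not a product of more than $N_a$ atoms. A Garside monoid is an atomic, left and right cancellative monoid in which every pair of elements has left and right least common multiples and greatest common divisors, and which has a Garside element $\Delta$: an element whose left divisors coincide with its right divisors, form a finite set, and generate $M$. A Garside group is the group of fractions $G$ of a Garside monoid $M$; $M$ embeds in $G$ and its elements are called positive. (It is known that some power $\Delta^k$, $k\geq 1$, is central in $G$, and every element of $G$ can be multiplied by a suitable power of $\Delta^{k}$ to become positive.) *)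

theory Defs
  imports "HOL-Algebra.Algebra"
begin

definition mprod :: "('a, 'b) monoid_scheme \<Rightarrow> 'a list \<Rightarrow> 'a" where
  "mprod M xs = foldr (\<lambda>x y. x \<otimes>\<^bsub>M\<^esub> y) xs \<one>\<^bsub>M\<^esub>"

definition ldiv :: "('a, 'b) monoid_scheme \<Rightarrow> 'a \<Rightarrow> 'a \<Rightarrow> bool" where
  "ldiv M a b \<longleftrightarrow> (\<exists>c\<in>carrier M. a \<otimes>\<^bsub>M\<^esub> c = b)"

definition rdiv :: "('a, 'b) monoid_scheme \<Rightarrow> 'a \<Rightarrow> 'a \<Rightarrow> bool" where
  "rdiv M a b \<longleftrightarrow> (\<exists>c\<in>carrier M. c \<otimes>\<^bsub>M\<^esub> a = b)"

definition is_atom :: "('a, 'b) monoid_scheme \<Rightarrow> 'a \<Rightarrow> bool" where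
  "is_atom M x \<longleftrightarrow> x \<in> carrier M \<and> x \<noteq> \<one>\<^bsub>M\<^esub> \<and>
     (\<forall>y\<in>carrier M. \<forall>z\<in>carrier M. x = y \<otimes>\<^bsub>M\<^esub> z \<longrightarrow> y = \<one>\<^bsub>M\<^esub> \<or> z = \<one>\<^bsub>M\<^esub>)"

definition monoid_generates :: "('a, 'b) monoid_scheme \<Rightarrow> 'a set \<Rightarrow> bool" where
  "monoid_generates M S \<longleftrightarrow>
     (\<forall>a\<in>carrier M. \<exists>xs. set xs \<subseteq> S \<and> mprod M xs = a)"

definition atomic_monoid :: "('a, 'b) monoid_scheme \<Rightarrow> bool" where
  "atomic_monoid M \<longleftrightarrow> monoid M \<and>
     monoid_generates M {x. is_atom M x} \<and>
     (\<forall>a\<in>carrier M. \<exists>N::nat. N > 0 \<and>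
        (\<forall>xs. set xs \<subseteq> {x. is_atom M x} \<and> mprod M xs = a \<longrightarrow> length xs \<le> N))"

definition cancellative_monoid :: "('a, 'b) monoid_scheme \<Rightarrow> bool" where
  "cancellative_monoid M \<longleftrightarrow>
     (\<forall>a\<in>carrier M. \<forall>b\<in>carrier M. \<forall>c\<in>carrier M.
        (a \<otimes>\<^bsub>M\<^esub> b = a \<otimes>\<^bsub>M\<^esub> c \<longrightarrow> b = c) \<and>
        (b \<otimes>\<^bsub>M\<^esub> a = c \<otimes>\<^bsub>M\<^esub> a \<longrightarrow> b = c))"

definition is_lcm_wrt :: "('a, 'b) monoid_scheme \<Rightarrow> ('a \<Rightarrow> 'a \<Rightarrow> bool) \<Rightarrow> 'a \<Rightarrow> 'a \<Rightarrow> 'a \<Rightarrow> bool" where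
  "is_lcm_wrt M D a b m \<longleftrightarrow> m \<in> carrier M \<and> D a m \<and> D b m \<and>
     (\<forall>d\<in>carrier M. D a d \<and> D b d \<longrightarrow> D m d)"

definition is_gcd_wrt :: "('a, 'b) monoid_scheme \<Rightarrow> ('a \<Rightarrow> 'a \<Rightarrow> bool) \<Rightarrow> 'a \<Rightarrow> 'a \<Rightarrow> 'a \<Rightarrow> bool" where
  "is_gcd_wrt M D a b g \<longleftrightarrow> g \<in> carrier M \<and> D g a \<and> D g b \<and>
     (\<forall>d\<in>carrier M. D d a \<and> D d b \<longrightarrow> D d g)"

definition garside_element :: "('a, 'b) monoid_scheme \<Rightarrow> 'a \<Rightarrow> bool" where
  "garside_element M \<Delta> \<longleftrightarrow> \<Delta> \<in> carrier M \<and>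
     {x\<in>carrier M. ldiv M x \<Delta>} = {x\<in>carrier M. rdiv M x \<Delta>} \<and>
     finite {x\<in>carrier M. ldiv M x \<Delta>} \<and>
     monoid_generates M {x\<in>carrier M. ldiv M x \<Delta>}"

definition garside_monoid :: "('a, 'b) monoid_scheme \<Rightarrow> bool" where
  "garside_monoid M \<longleftrightarrow> atomic_monoid M \<and> cancellative_monoid M \<and>
     (\<forall>a\<in>carrier M. \<forall>b\<in>carrier M.
        (\<exists>m. is_lcm_wrt M (ldiv M) a b m) \<and> (\<exists>m. is_lcm_wrt M (rdiv M) a b m) \<and>
        (\<exists>g. is_gcd_wrt M (ldiv M) a b g) \<and> (\<exists>g. is_gcd_wrt M (rdiv M) a b g)) \<and>
     (\<exists>\<Delta>. garside_element M \<Delta>)"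

text \<open>G is a Garside group with Garside monoid M (M a subset of G): M is a submonoid of the
  group G, M with the induced operation is a Garside monoid, and G is the group of fractions
  of M, i.e. G is generated as a group by M (M being an Ore monoid embedded in G, the
  subgroup generated by M is its group of fractions).\<close>
definition garside_group :: "('a, 'b) monoid_scheme \<Rightarrow> 'a set \<Rightarrow> bool" where
  "garside_group G M \<longleftrightarrow> group G \<and> submonoid M G \<and>
     garside_monoid (G\<lparr>carrier := M\<rparr>) \<and> generate G M = carrier G"

definition centralizer :: "('a, 'b) monoid_scheme \<Rightarrow> 'a \<Rightarrow> 'a set" where
  "centralizer G a = {c \<in> carrier G. c \<otimes>\<^bsub>G\<^esub> a = a \<otimes>\<^bsub>G\<^esub> c}"

end

theory Submission
  imports Defs
begin

context group
begin

lemma pow_comm_gen: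
  assumes "D \<in> carrier G" "g \<in> carrier G" "D \<otimes> g = g \<otimes> D"
  shows "(D [^] (n::nat)) \<otimes> g = g \<otimes> (D [^] n)"
proof (induction n)
  case 0 then show ?case using assms by simp
next
  case (Suc n)
  have "D [^] Suc n \<otimes> g = D [^] n \<otimes> (D \<otimes> g)" using assms by (simp add: m_assoc)
  also have "\<dots> = (D [^] n \<otimes> g) \<otimes> D" using assms by (simp add: m_assoc)
  also have "\<dots> = g \<otimes> D [^] Suc n" using assms Suc by (simp add: m_assoc)
  finally show ?case .
qed

lemma submonoid_pow:
  assumes "submonoid M G" "D \<in> M"
  shows "D [^] (n::nat) \<in> M"
  by (induction n) (use assms in \<open>auto simp: submonoid.one_closed submonoid.m_closed\<close>)

lemma submonoid_foldr:
  assumes "submonoid M G" "set xs \<subseteq> M"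
  shows "foldr (\<otimes>) xs \<one> \<in> M"
  using assms(2)
  by (induction xs) (use assms(1) in \<open>auto simp: submonoid.one_closed submonoid.m_closed\<close>)

lemma conj_pow_eq:
  assumes "D \<in> carrier G" "x \<in> carrier G"
  shows "inv (D [^] (Suc n)) \<otimes> x \<otimes> D [^] (Suc n) = inv D \<otimes> (inv (D [^] n) \<otimes> x \<otimes> D [^] n) \<otimes> D"
  using assms by (simp add: inv_mult_group m_assoc)

lemma comm_inv:
  assumes "x \<in> carrier G" "y \<in> carrier G" "x \<otimes> y = y \<otimes> x"
  shows "x \<otimes> inv y = inv y \<otimes> x"
proof -
  have "inv y \<otimes> x = inv y \<otimes> (x \<otimes> y) \<otimes> inv y" using assms
    by (metis m_assoc r_inv r_one inv_closed m_closed)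
  also have "\<dots> = inv y \<otimes> (y \<otimes> x) \<otimes> inv y" using assms by simp
  also have "\<dots> = x \<otimes> inv y" using assms by (simp add: m_assoc[symmetric])
  finally show ?thesis by simp
qed

end

lemma (in group) main_aux:
  assumes sub: "submonoid M G" and gen: "generate G M = carrier G"
    and gm: "garside_monoid (G\<lparr>carrier := M\<rparr>)" and aG: "a \<in> carrier G"
  shows "centralizer G a = generate G (centralizer G a \<inter> M)"
proof -
  have MG: "M \<subseteq> carrier G" using sub submonoid.subset by blast
  have M1: "\<one> \<in> M" using sub submonoid.one_closed by blast
  have Mm: "x \<otimes> y \<in> M" if "x \<in> M" "y \<in> M" for x y
    by (rule submonoid.m_closed[OF sub that])
  obtain \<Delta> where ge: "garside_element (G\<lparr>carrier := M\<rparr>) \<Delta>"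
    using gm unfolding garside_monoid_def by blast
  define Dv where "Dv = {x\<in>M. \<exists>c\<in>M. x \<otimes> c = \<Delta>}"
  have seteq: "{x\<in>carrier (G\<lparr>carrier := M\<rparr>). ldiv (G\<lparr>carrier := M\<rparr>) x \<Delta>} = Dv"
    unfolding Dv_def ldiv_def by simp
  have ge2: "\<Delta> \<in> M" "Dv = {x\<in>carrier (G\<lparr>carrier := M\<rparr>). rdiv (G\<lparr>carrier := M\<rparr>) x \<Delta>}"
    "finite Dv" "monoid_generates (G\<lparr>carrier := M\<rparr>) Dv"
    using ge unfolding garside_element_def seteq by auto
  have DM: "\<Delta> \<in> M" using ge2 by simp
  have DG: "\<Delta> \<in> carrier G" using DM MG by blast
  have Dv_eq: "Dv = {x\<in>M. \<exists>c\<in>M. c \<otimes> x = \<Delta>}"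
    using ge2(2) unfolding rdiv_def by simp
  have fin: "finite Dv" using ge2 by simp
  have gen_Dv: "\<exists>xs. set xs \<subseteq> Dv \<and> foldr (\<otimes>) xs \<one> = x" if "x \<in> M" for x
    using ge2(4) that unfolding monoid_generates_def mprod_def by simp
  have DvM: "Dv \<subseteq> M" unfolding Dv_def by blast
  have conjD: "inv \<Delta> \<otimes> x \<otimes> \<Delta> \<in> Dv" if xD: "x \<in> Dv" for x
  proof -
    obtain y where y: "y \<in> M" "x \<otimes> y = \<Delta>" "x \<in> M" using xD Dv_def by auto
    have "y \<in> Dv" using Dv_eq y by auto
    then obtain z where z: "z \<in> M" "y \<otimes> z = \<Delta>" unfolding Dv_def by auto
    have G: "x \<in> carrier G" "y \<in> carrier G" "z \<in> carrier G" using y z MG by auto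
    have "inv \<Delta> \<otimes> x \<otimes> \<Delta> = inv \<Delta> \<otimes> (x \<otimes> y) \<otimes> z"
      using G DG by (simp flip: z(2) add: m_assoc)
    also have "\<dots> = z" using G DG y(2) by simp
    finally show ?thesis using Dv_eq z y by auto
  qed
  have conjDn: "inv (\<Delta> [^] n) \<otimes> x \<otimes> \<Delta> [^] n \<in> Dv" if "x \<in> Dv" for x and n :: nat
  proof (induction n)
    case 0 then show ?case using that DvM MG by auto
  next
    case (Suc n) then show ?case using conj_pow_eq[OF DG, of x n] conjD that DvM MG by auto
  qed
  define f where "f = (\<lambda>n::nat. restrict (\<lambda>x. inv (\<Delta> [^] n) \<otimes> x \<otimes> \<Delta> [^] n) Dv)"
  have "range f \<subseteq> Dv \<rightarrow>\<^sub>E Dv" unfolding f_def using conjDn by auto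
  moreover have "finite (Dv \<rightarrow>\<^sub>E Dv)" using fin by (simp add: finite_PiE)
  ultimately have "finite (range f)" by (rule finite_subset)
  hence "\<not> inj f" using finite_imageD by blast
  then obtain i j where ij: "i < j" "f i = f j"
    unfolding inj_def by (metis linorder_neq_iff)
  define k where "k = j - i"
  have k0: "k > 0" and jk: "j = i + k" using ij unfolding k_def by auto
  define D where "D = \<Delta> [^] k"
  have DkM: "D \<in> M" unfolding D_def using submonoid_pow[OF sub DM] .
  have DkG: "D \<in> carrier G" using DkM MG by blast
  have commDv: "D \<otimes> x = x \<otimes> D" if "x \<in> Dv" for x
  proof -
    have xG: "x \<in> carrier G" using that DvM MG by blast
    have "inv (\<Delta> [^] i) \<otimes> x \<otimes> \<Delta> [^] i = inv (\<Delta> [^] j) \<otimes> x \<otimes> \<Delta> [^] j"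
      using fun_cong[OF ij(2), of x] that unfolding f_def by simp
    also have "\<Delta> [^] j = D \<otimes> \<Delta> [^] i" unfolding jk D_def using DG
      by (simp add: nat_pow_mult add.commute)
    finally have e: "inv (\<Delta> [^] i) \<otimes> x \<otimes> \<Delta> [^] i
        = inv (\<Delta> [^] i) \<otimes> (inv D \<otimes> x \<otimes> D) \<otimes> \<Delta> [^] i"
      using DG DkG xG by (simp add: inv_mult_group m_assoc)
    have "x = inv D \<otimes> x \<otimes> D"
      using e DG DkG xG by (metis inv_closed l_cancel m_closed nat_pow_closed r_cancel)
    then show ?thesis using DkG xG
      by (metis inv_closed m_assoc m_closed r_inv l_one)
  qed
  have commM: "D \<otimes> x = x \<otimes> D" if xM: "x \<in> M" for x
  proof -
    obtain xs where xs: "set xs \<subseteq> Dv" "foldr (\<otimes>) xs \<one> = x" using gen_Dv[OF xM] by blast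
    have "D \<otimes> foldr (\<otimes>) xs \<one> = foldr (\<otimes>) xs \<one> \<otimes> D" using xs(1)
    proof (induction xs)
      case Nil then show ?case using DkG by simp
    next
      case (Cons y ys)
      have yG: "y \<in> carrier G" using Cons.prems DvM MG by auto
      have rG: "foldr (\<otimes>) ys \<one> \<in> carrier G"
        using submonoid_foldr[OF sub, of ys] Cons.prems DvM MG by auto
      have "D \<otimes> (y \<otimes> foldr (\<otimes>) ys \<one>) = (D \<otimes> y) \<otimes> foldr (\<otimes>) ys \<one>"
        using yG rG DkG by (simp add: m_assoc)
      also have "\<dots> = y \<otimes> (D \<otimes> foldr (\<otimes>) ys \<one>)"
        using commDv[of y] Cons.prems yG rG DkG by (simp add: m_assoc)
      also have "\<dots> = (y \<otimes> foldr (\<otimes>) ys \<one>) \<otimes> D"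
        using Cons yG rG DkG by (simp add: m_assoc)
      finally show ?case by simp
    qed
    then show ?thesis using xs by simp
  qed
  have commG: "D \<otimes> g = g \<otimes> D" if "g \<in> carrier G" for g
  proof -
    have "g \<in> generate G M" using that gen by simp
    then show ?thesis
    proof (induction rule: generate.induct)
      case one then show ?case using DkG by simp
    next
      case (incl h) then show ?case using commM by blast
    next
      case (inv h)
      have hG: "h \<in> carrier G" using inv MG by blast
      have e: "D \<otimes> h = h \<otimes> D" using commM inv by blast
      show ?case using comm_inv[OF DkG hG e] by simp
    next
      case (eng h1 h2)
      have G1: "h1 \<in> carrier G" "h2 \<in> carrier G" using eng.hyps gen by auto
      have "D \<otimes> (h1 \<otimes> h2) = (D \<otimes> h1) \<otimes> h2" using G1 DkG by (simp add: m_assoc)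
      also have "\<dots> = h1 \<otimes> (D \<otimes> h2)" using eng.IH G1 DkG by (simp add: m_assoc)
      also have "\<dots> = h1 \<otimes> (h2 \<otimes> D)" using eng.IH by simp
      also have "\<dots> = (h1 \<otimes> h2) \<otimes> D" using G1 DkG by (simp add: m_assoc)
      finally show ?case .
    qed
  qed
  have commGn: "D [^] n \<otimes> g = g \<otimes> D [^] n" if "g \<in> carrier G" for g and n :: nat
    using pow_comm_gen[OF DkG that commG[OF that]] .
  have DnM: "D [^] (n::nat) \<in> M" for n using submonoid_pow[OF sub DkM] .
  have DnG: "D [^] (n::nat) \<in> carrier G" for n using DnM MG by blast
  have invDv: "D \<otimes> inv y \<in> M" if yD: "y \<in> Dv" for y
  proof -
    obtain w where w: "w \<in> M" "y \<otimes> w = \<Delta>" "y \<in> M" using yD Dv_def by auto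
    have G: "y \<in> carrier G" "w \<in> carrier G" using w MG by auto
    have iy: "inv y = w \<otimes> inv \<Delta>" using G DG w(2)
      by (metis inv_equality m_assoc m_closed r_inv inv_closed r_one)
    obtain k' where k': "k = Suc k'" using k0 by (cases k) auto
    have kk: "D = \<Delta> [^] (k - 1) \<otimes> \<Delta>" unfolding D_def k' by simp
    have "D \<otimes> inv y = (D \<otimes> w) \<otimes> inv \<Delta>" using iy G DG DkG by (simp add: m_assoc)
    also have "\<dots> = w \<otimes> (\<Delta> [^] (k - 1) \<otimes> \<Delta>) \<otimes> inv \<Delta>" using commM[OF w(1)] kk by simp
    also have "\<dots> = w \<otimes> \<Delta> [^] (k - 1)" using G DG by (simp add: m_assoc)
    finally show ?thesis using w(1) Mm submonoid_pow[OF sub DM] by simp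
  qed
  have invM: "\<exists>n. D [^] (n::nat) \<otimes> inv x \<in> M" if xM: "x \<in> M" for x
  proof -
    obtain xs where xs: "set xs \<subseteq> Dv" "foldr (\<otimes>) xs \<one> = x" using gen_Dv[OF xM] by blast
    have "\<exists>n. D [^] (n::nat) \<otimes> inv (foldr (\<otimes>) xs \<one>) \<in> M" using xs(1)
    proof (induction xs)
      case Nil then show ?case using M1 by (intro exI[of _ 0]) simp
    next
      case (Cons y ys)
      then obtain n :: nat where n: "D [^] n \<otimes> inv (foldr (\<otimes>) ys \<one>) \<in> M" by auto
      have yG: "y \<in> carrier G" using Cons.prems DvM MG by auto
      have rG: "foldr (\<otimes>) ys \<one> \<in> carrier G"
        using submonoid_foldr[OF sub, of ys] Cons.prems DvM MG by auto
      have "D [^] Suc n \<otimes> inv (y \<otimes> foldr (\<otimes>) ys \<one>)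
          = D [^] n \<otimes> (D \<otimes> inv (foldr (\<otimes>) ys \<one>)) \<otimes> inv y"
        using yG rG DkG by (simp add: inv_mult_group m_assoc)
      also have "\<dots> = (D [^] n \<otimes> inv (foldr (\<otimes>) ys \<one>)) \<otimes> (D \<otimes> inv y)"
        using yG rG DkG commG[of "inv (foldr (\<otimes>) ys \<one>)"] by (simp add: m_assoc)
      finally have "D [^] Suc n \<otimes> inv (foldr (\<otimes>) (y # ys) \<one>) \<in> M"
        using n invDv[of y] Cons.prems Mm by simp
      then show ?case by blast
    qed
    then show ?thesis using xs by simp
  qed
  have pos: "\<exists>n. D [^] (n::nat) \<otimes> g \<in> M" if "g \<in> carrier G" for g
  proof -
    have "g \<in> generate G M" using that gen by simp
    then show ?thesis
    proof (induction rule: generate.induct)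
      case one then show ?case using M1 by (intro exI[of _ 0]) simp
    next
      case (incl h) then show ?case using MG by (intro exI[of _ 0]) auto
    next
      case (inv h) then show ?case using invM by blast
    next
      case (eng h1 h2)
      have G1: "h1 \<in> carrier G" "h2 \<in> carrier G" using eng.hyps gen by auto
      obtain n1 n2 :: nat where n: "D [^] n1 \<otimes> h1 \<in> M" "D [^] n2 \<otimes> h2 \<in> M" using eng.IH by blast
      have "D [^] (n1 + n2) \<otimes> (h1 \<otimes> h2) = D [^] n1 \<otimes> (D [^] n2 \<otimes> h1) \<otimes> h2"
        using G1 DkG by (simp add: m_assoc flip: nat_pow_mult)
      also have "\<dots> = (D [^] n1 \<otimes> h1) \<otimes> (D [^] n2 \<otimes> h2)"
        using G1 DkG commGn[of h1 n2] by (simp add: m_assoc)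
      finally show ?case using n Mm by metis
    qed
  qed
  show ?thesis
  proof
    show "centralizer G a \<subseteq> generate G (centralizer G a \<inter> M)"
    proof
      fix c assume c: "c \<in> centralizer G a"
      hence cG: "c \<in> carrier G" and ca: "c \<otimes> a = a \<otimes> c" unfolding centralizer_def by auto
      obtain n :: nat where n: "D [^] n \<otimes> c \<in> M" using pos[OF cG] by blast
      have u: "D [^] n \<in> centralizer G a" unfolding centralizer_def
        using commGn[OF aG] DnG by simp
      have "(D [^] n \<otimes> c) \<otimes> a = a \<otimes> (D [^] n \<otimes> c)"
        using commGn[OF aG, of n] ca cG aG DnG by (metis m_assoc)
      hence p: "D [^] n \<otimes> c \<in> centralizer G a" unfolding centralizer_def using cG DnG by simp
      have "inv (D [^] n) \<otimes> (D [^] n \<otimes> c) \<in> generate G (centralizer G a \<inter> M)"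
        using u p n DnM by (blast intro: generate.inv generate.incl generate.eng)
      then show "c \<in> generate G (centralizer G a \<inter> M)" using cG DnG by (simp flip: m_assoc)
    qed
  next
    show "generate G (centralizer G a \<inter> M) \<subseteq> centralizer G a"
    proof
      fix g assume "g \<in> generate G (centralizer G a \<inter> M)"
      then show "g \<in> centralizer G a"
      proof (induction rule: generate.induct)
        case one then show ?case using aG unfolding centralizer_def by simp
      next
        case (incl h) then show ?case by blast
      next
        case (inv h)
        hence hG: "h \<in> carrier G" and e: "h \<otimes> a = a \<otimes> h" unfolding centralizer_def by auto
        show ?case using comm_inv[OF aG hG e[symmetric]] hG unfolding centralizer_def by simp
      next
        case (eng h1 h2)
        hence G1: "h1 \<in> carrier G" "h2 \<in> carrier G" and e: "h1 \<otimes> a = a \<otimes> h1" "h2 \<otimes> a = a \<otimes> h2"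
          unfolding centralizer_def by auto
        have "h1 \<otimes> h2 \<otimes> a = a \<otimes> (h1 \<otimes> h2)" using G1 aG e by (metis m_assoc)
        then show ?case using G1 unfolding centralizer_def by simp
      qed
    qed
  qed
qed


theorem lemma3p1:
  fixes G :: "('a, 'b) monoid_scheme" and M :: "'a set" and a :: 'a
  assumes "garside_group G M"
    and "a \<in> carrier G"
  shows "centralizer G a = generate G (centralizer G a \<inter> M)"
proof -
  have g: "group G" and s: "submonoid M G" and m: "garside_monoid (G\<lparr>carrier := M\<rparr>)"
    and e: "generate G M = carrier G"
    using assms(1) unfolding garside_group_def by auto
  show ?thesis using group.main_aux[OF g s e m assms(2)] .
qed

end
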